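(* Let $(e_{m,n})_{m,n\in\mathbb N}$ be nonnegative random variables such that for each $n\in\mathbb N$, $(e_{m,n})_{m\in\mathbb N}$ is an asymptotic e-variable for $\mathcal P$. For $m,n\in\mathbb N$ set $\mathcal F_{m,n}=\sigma(e_{m,i}: i\le n)$ and $E_{m,n}=\prod_{i=0}^n e_{m,i}$. Assume that for every $m\in\mathbb N$ there is $d_m\ge 0$ with $$\mathbb E_P[e_{m,n+1}\mid\mathcal F_{m,n}]\le 1+d_m\quad P\text{-a.s., for all }P\in\mathcal P,\ n\in\mathbb N.$$ If $d_m\to0$ as $m\to\infty$, then $E$ has the asymptotic supermartingale property for $\mathcal F$ uniformly in $\mathcal P$; and in this case $E$ is an $r$-asymptotic e-process for $\mathcal P$ and $\mathcal F$ for every integer sequence $r=(r_m)_{m\in\mathbb N}\subset\mathbb N$ with $r_md_m\to0$ as $m\to\infty$.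
   Context: $(\Omega,\mathcal A)$ is a measurable space, $\mathcal P$ a set of probability measures on it, $\mathbb N=\{0,1,\dots\}$. Nonnegative random variables take values in $[0,\infty]$ with $\mathbb E_P[X]:=\infty$ if not $P$-integrable; $X_\infty:=\limsup_nX_n$. A sequence of nonnegative random variables $(e_m)_{m\in\mathbb N}$ is a (uniformly strongly) asymptotic e-variable for $\mathcal P$ if $\limsup_{m\to\infty}\sup_{P\in\mathcal P}\mathbb E_P[e_m]\le1$. For $P\in\mathcal P$, $\delta_{m,n}=\mathbb E_P[E_{m,n+1}\mid\mathcal F_{m,n}]-E_{m,n}$ if $E_{m,n+1}$ is $P$-integrable and $\delta_{m,n}=\infty$ otherwise; $x^+=\max\{x,0\}$; $E$ has the asymptotic supermartingale property if $\lim_m\sup_{P\in\mathcal P}\mathbb E_P[\delta^+_{m,n}]=0$ for every $n$. For a filtration $\mathcal G$ and $\rho\in\mathbb N\cup\{\infty\}$, $\mathcal T(\rho,\mathcal G,\mathcal P)$ is the set of $\mathcal G$-stopping times $\tau$ (values in $\mathbb N\cup\{\infty\}$) with $P[\tau\le\rho]=1$ for all $P\in\mathcal P$; $\mathcal T(r,\mathcal F,\mathcal P)$ is the set of sequences $(\tau_m)$ with $\tau_m\in\mathcal T(r_m,\mathcal F_{m,\bullet},\mathcal P)$. $E$ is an $r$-asymptotic e-process if for every $\tau\in\mathcal T(r,\mathcal F,\mathcal P)$, $\limsup_m\sup_{P\in\mathcal P}\mathbb E_P[E_{m,\tau_m}]\le1$. *)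

theory Defs
  imports "HOL-Probability.Probability"
begin

text \<open>Setting: the measurable space is given by a measure M (only space M and sets M matter);
  the family of probability measures is a set Ps of measures on the same measurable space.
  Nonnegative random variables take values in ennreal = [0,\<infinity>]; expectations of nonnegative
  variables are nonnegative Lebesgue integrals (which are \<infinity> exactly when not integrable).\<close>

definition prob_family :: "'a measure \<Rightarrow> 'a measure set \<Rightarrow> bool" where
  "prob_family M Ps \<longleftrightarrow> (\<forall>P\<in>Ps. prob_space P \<and> sets P = sets M)"

definition asymp_evar :: "'a measure set \<Rightarrow> (nat \<Rightarrow> 'a \<Rightarrow> ennreal) \<Rightarrow> bool" where
  "asymp_evar Ps e \<longleftrightarrow> limsup (\<lambda>m. SUP P\<in>Ps. \<integral>\<^sup>+ x. e m x \<partial>P) \<le> 1"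

definition gen_filt :: "'a measure \<Rightarrow> (nat \<Rightarrow> nat \<Rightarrow> 'a \<Rightarrow> ennreal) \<Rightarrow> nat \<Rightarrow> nat \<Rightarrow> 'a measure" where
  "gen_filt M e m n =
     sigma (space M) (\<Union>i\<in>{..n}. {e m i -` B \<inter> space M | B. B \<in> sets borel})"

definition prod_proc :: "(nat \<Rightarrow> nat \<Rightarrow> 'a \<Rightarrow> ennreal) \<Rightarrow> nat \<Rightarrow> nat \<Rightarrow> 'a \<Rightarrow> ennreal" where
  "prod_proc e m n x = (\<Prod>i\<in>{..n}. e m i x)"

text \<open>Positive part of delta_{m,n}: delta = E_P[E_{m,n+1} | F_{m,n}] - E_{m,n} if E_{m,n+1} is
  P-integrable, and \<infinity> otherwise.  Truncated ennreal subtraction yields exactly the positive part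
  (with a - \<infinity> = 0 for finite a, i.e. (-\<infinity>)^+ = 0).\<close>
definition delta_pos ::
  "'a measure \<Rightarrow> (nat \<Rightarrow> 'a measure) \<Rightarrow> (nat \<Rightarrow> 'a \<Rightarrow> ennreal) \<Rightarrow> nat \<Rightarrow> 'a \<Rightarrow> ennreal" where
  "delta_pos P F E n x =
     (if (\<integral>\<^sup>+ y. E (Suc n) y \<partial>P) < \<infinity>
      then nn_cond_exp P (F n) (E (Suc n)) x - E n x
      else \<infinity>)"

definition asymp_supermart ::
  "'a measure set \<Rightarrow> (nat \<Rightarrow> nat \<Rightarrow> 'a measure) \<Rightarrow> (nat \<Rightarrow> nat \<Rightarrow> 'a \<Rightarrow> ennreal) \<Rightarrow> bool" where
  "asymp_supermart Ps F E \<longleftrightarrow>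
     (\<forall>n. (\<lambda>m. SUP P\<in>Ps. \<integral>\<^sup>+ x. delta_pos P (F m) (E m) n x \<partial>P) \<longlonglongrightarrow> 0)"

definition enat_stopping_time :: "(nat \<Rightarrow> 'a measure) \<Rightarrow> ('a \<Rightarrow> enat) \<Rightarrow> bool" where
  "enat_stopping_time G \<tau> \<longleftrightarrow> (\<forall>n. {x\<in>space (G n). \<tau> x \<le> enat n} \<in> sets (G n))"

definition bounded_stopping_times ::
  "enat \<Rightarrow> (nat \<Rightarrow> 'a measure) \<Rightarrow> 'a measure set \<Rightarrow> ('a \<Rightarrow> enat) set" where
  "bounded_stopping_times \<rho> G Ps =
     {\<tau>. enat_stopping_time G \<tau> \<and> (\<forall>P\<in>Ps. AE x in P. \<tau> x \<le> \<rho>)}"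

definition stopped :: "(nat \<Rightarrow> 'a \<Rightarrow> ennreal) \<Rightarrow> ('a \<Rightarrow> enat) \<Rightarrow> 'a \<Rightarrow> ennreal" where
  "stopped X \<tau> x = (case \<tau> x of enat n \<Rightarrow> X n x | \<infinity> \<Rightarrow> limsup (\<lambda>n. X n x))"

definition r_asymp_eproc ::
  "(nat \<Rightarrow> nat) \<Rightarrow> 'a measure set \<Rightarrow> (nat \<Rightarrow> nat \<Rightarrow> 'a measure) \<Rightarrow> (nat \<Rightarrow> nat \<Rightarrow> 'a \<Rightarrow> ennreal) \<Rightarrow> bool" where
  "r_asymp_eproc r Ps F E \<longleftrightarrow>
     (\<forall>\<tau>. (\<forall>m. \<tau> m \<in> bounded_stopping_times (enat (r m)) (F m) Ps) \<longrightarrow>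
        limsup (\<lambda>m. SUP P\<in>Ps. \<integral>\<^sup>+ x. stopped (E m) (\<tau> m) x \<partial>P) \<le> 1)"

end

theory Submission
  imports Defs
begin

lemma space_gen_filt[simp]: "space (gen_filt M e m n) = space M"
  unfolding gen_filt_def by (rule space_measure_of) auto

lemma gen_filt_gens_sub:
  assumes "\<And>i. e m i \<in> borel_measurable M"
  shows "(\<Union>i\<in>{..n}. {e m i -` B \<inter> space M | B. B \<in> sets borel}) \<subseteq> sets M"
  using assms measurable_sets by blast

lemma sets_gen_filt:
  "sets (gen_filt M e m n) = sigma_sets (space M) (\<Union>i\<in>{..n}. {e m i -` B \<inter> space M | B. B \<in> sets borel})"
  unfolding gen_filt_def by (rule sets_measure_of) auto

lemma sets_gen_filt_sub:
  assumes "\<And>i. e m i \<in> borel_measurable M"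
  shows "sets (gen_filt M e m n) \<subseteq> sets M"
  unfolding sets_gen_filt
  by (rule sets.sigma_sets_subset) (rule gen_filt_gens_sub[where e=e, OF assms])

lemma gen_filt_mono:
  assumes "k \<le> n"
  shows "sets (gen_filt M e m k) \<subseteq> sets (gen_filt M e m n)"
  unfolding sets_gen_filt
  by (rule sigma_sets_mono') (use assms in fastforce)

lemma e_meas_filt:
  assumes "i \<le> n"
  shows "e m i \<in> borel_measurable (gen_filt M e m n)"
proof (rule measurableI)
  fix B :: "ennreal set" assume "B \<in> sets borel"
  then have "e m i -` B \<inter> space M \<in> (\<Union>i\<in>{..n}. {e m i -` B \<inter> space M | B. B \<in> sets borel})"
    using assms by blast
  then show "e m i -` B \<inter> space (gen_filt M e m n) \<in> sets (gen_filt M e m n)"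
    unfolding sets_gen_filt by auto
qed auto

lemma prod_meas_filt:
  "prod_proc e m n \<in> borel_measurable (gen_filt M e m n)"
proof -
  have "(\<lambda>x. \<Prod>i\<in>{..n}. e m i x) \<in> borel_measurable (gen_filt M e m n)"
    by (rule borel_measurable_prod_ennreal) (auto intro: e_meas_filt)
  then show ?thesis unfolding prod_proc_def[abs_def] .
qed

lemma subalg_P:
  assumes "sets P = sets M" "\<And>i. e m i \<in> borel_measurable M"
  shows "subalgebra P (gen_filt M e m n)"
  unfolding subalgebra_def using sets_gen_filt_sub[where e=e, OF assms(2)] assms(1) sets_eq_imp_space_eq[OF assms(1)]
  by auto

lemma sfs_P:
  assumes "prob_space P" "sets P = sets M" "\<And>i. e m i \<in> borel_measurable M"
  shows "sigma_finite_subalgebra P (gen_filt M e m n)"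
proof -
  interpret prob_space P by fact
  have "finite_measure_subalgebra P (gen_filt M e m n)"
    by unfold_locales (rule subalg_P[where e=e, OF assms(2,3)])
  then show ?thesis by (rule finite_measure_subalgebra_is_sigma_finite)
qed


lemma meas_P:
  assumes "sets P = sets M" "\<And>i. e m i \<in> borel_measurable M"
    and "f \<in> borel_measurable (gen_filt M e m n)"
  shows "f \<in> borel_measurable P"
  by (rule measurable_from_subalg[OF subalg_P[where e=e, OF assms(1,2)] assms(3)])

lemma key_ineq:
  assumes P: "prob_space P" "sets P = sets M" and em: "\<And>i. e m i \<in> borel_measurable M"
    and c: "AE x in P. nn_cond_exp P (gen_filt M e m k) (e m (Suc k)) x \<le> 1 + ennreal c"
    and g: "g \<in> borel_measurable (gen_filt M e m k)"
  shows "(\<integral>\<^sup>+x. g x * e m (Suc k) x \<partial>P) \<le> (1 + ennreal c) * (\<integral>\<^sup>+x. g x \<partial>P)"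
proof -
  interpret sigma_finite_subalgebra P "gen_filt M e m k"
    by (rule sfs_P[where e=e, OF P em])
  have eP: "e m (Suc k) \<in> borel_measurable P"
    by (subst measurable_cong_sets[OF P(2) refl]) (rule em)
  have gP: "g \<in> borel_measurable P" by (rule meas_P[where e=e, OF P(2) em g])
  have "(\<integral>\<^sup>+x. g x * e m (Suc k) x \<partial>P) = (\<integral>\<^sup>+x. g x * nn_cond_exp P (gen_filt M e m k) (e m (Suc k)) x \<partial>P)"
    by (rule nn_cond_exp_intg[symmetric, OF g eP])
  also have "\<dots> \<le> (\<integral>\<^sup>+x. g x * (1 + ennreal c) \<partial>P)"
    by (rule nn_integral_mono_AE, rule eventually_mono[OF c], rule mult_left_mono, auto)
  also have "\<dots> = (1 + ennreal c) * (\<integral>\<^sup>+x. g x \<partial>P)"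
    by (simp add: nn_integral_multc gP mult.commute)
  finally show ?thesis .
qed

primrec Yst :: "(nat \<Rightarrow> nat \<Rightarrow> 'a \<Rightarrow> ennreal) \<Rightarrow> nat \<Rightarrow> ('a \<Rightarrow> enat) \<Rightarrow> nat \<Rightarrow> 'a \<Rightarrow> ennreal" where
  "Yst e m \<tau> 0 x = e m 0 x"
| "Yst e m \<tau> (Suc k) x = (if \<tau> x \<le> enat k then Yst e m \<tau> k x else Yst e m \<tau> k x * e m (Suc k) x)"

lemma Yst_meas:
  assumes "enat_stopping_time (gen_filt M e m) \<tau>"
  shows "Yst e m \<tau> k \<in> borel_measurable (gen_filt M e m k)"
proof (induction k)
  case 0
  have "e m 0 \<in> borel_measurable (gen_filt M e m 0)" by (rule e_meas_filt) simp
  then show ?case by (simp add: fun_eq_iff[symmetric])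
next
  case (Suc k)
  have sub: "subalgebra (gen_filt M e m (Suc k)) (gen_filt M e m k)"
    unfolding subalgebra_def using gen_filt_mono[of k "Suc k" M e m] by auto
  have Y: "Yst e m \<tau> k \<in> borel_measurable (gen_filt M e m (Suc k))"
    by (rule measurable_from_subalg[OF sub Suc])
  have S: "{x\<in>space (gen_filt M e m (Suc k)). \<tau> x \<le> enat k} \<in> sets (gen_filt M e m (Suc k))"
    using assms unfolding enat_stopping_time_def
    using gen_filt_mono[of k "Suc k" M e m] by auto
  have "(\<lambda>x. if \<tau> x \<le> enat k then Yst e m \<tau> k x else Yst e m \<tau> k x * e m (Suc k) x)
      \<in> borel_measurable (gen_filt M e m (Suc k))"
    by (rule measurable_If[OF Y _ S]) (intro borel_measurable_times_ennreal Y e_meas_filt, simp)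
  then show ?case by (simp add: fun_eq_iff[symmetric])
qed

lemma Yst_val:
  "(\<tau> x = enat j \<longrightarrow> j \<le> k \<longrightarrow> Yst e m \<tau> k x = prod_proc e m j x)
   \<and> (\<not> \<tau> x \<le> enat k \<longrightarrow> Yst e m \<tau> k x = prod_proc e m k x)"
proof (induction k)
  case 0
  then show ?case by (auto simp: prod_proc_def)
next
  case (Suc k)
  have pS: "prod_proc e m (Suc k) x = prod_proc e m k x * e m (Suc k) x"
    by (simp add: prod_proc_def atMost_Suc mult.commute)
  have A: "\<not> \<tau> x \<le> enat k \<Longrightarrow> Yst e m \<tau> (Suc k) x = prod_proc e m (Suc k) x"
  proof -
    assume nk: "\<not> \<tau> x \<le> enat k"
    have "Yst e m \<tau> (Suc k) x = Yst e m \<tau> k x * e m (Suc k) x"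
      using nk by (simp only: Yst.simps if_False)
    also have "Yst e m \<tau> k x = prod_proc e m k x" using Suc.IH nk by blast
    finally show ?thesis using pS by simp
  qed
  show ?case
  proof (intro conjI impI)
    assume "\<not> \<tau> x \<le> enat (Suc k)"
    then have "\<not> \<tau> x \<le> enat k" using order_trans[of "\<tau> x" "enat k" "enat (Suc k)"] by force
    then show "Yst e m \<tau> (Suc k) x = prod_proc e m (Suc k) x" by (rule A)
  next
    assume j: "\<tau> x = enat j" "j \<le> Suc k"
    show "Yst e m \<tau> (Suc k) x = prod_proc e m j x"
    proof (cases "j \<le> k")
      case True
      then have "\<tau> x \<le> enat k" using j by simp
      then have "Yst e m \<tau> (Suc k) x = Yst e m \<tau> k x" by (simp only: Yst.simps if_True)
      then show ?thesis using Suc.IH j True by simp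
    next
      case False
      then have "j = Suc k" using j by simp
      have "\<not> \<tau> x \<le> enat k" using j False by simp
      then show ?thesis using A \<open>j = Suc k\<close> by simp
    qed
  qed
qed


lemma Yst_step:
  assumes P: "prob_space P" "sets P = sets M" and em: "\<And>i. e m i \<in> borel_measurable M"
    and st: "enat_stopping_time (gen_filt M e m) \<tau>"
    and c: "AE x in P. nn_cond_exp P (gen_filt M e m k) (e m (Suc k)) x \<le> 1 + ennreal c"
  shows "(\<integral>\<^sup>+x. Yst e m \<tau> (Suc k) x \<partial>P) \<le> (1 + ennreal c) * (\<integral>\<^sup>+x. Yst e m \<tau> k x \<partial>P)"
proof -
  define h where "h x = (if \<tau> x \<le> enat k then Yst e m \<tau> k x else 0)" for x
  define g where "g x = (if \<tau> x \<le> enat k then 0 else Yst e m \<tau> k x)" for x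
  have Yk: "Yst e m \<tau> k \<in> borel_measurable (gen_filt M e m k)" by (rule Yst_meas[OF st])
  have S: "{x\<in>space (gen_filt M e m k). \<tau> x \<le> enat k} \<in> sets (gen_filt M e m k)"
    using st unfolding enat_stopping_time_def by auto
  have gF: "g \<in> borel_measurable (gen_filt M e m k)"
    unfolding g_def[abs_def] by (rule measurable_If[OF _ Yk S]) simp
  have hF: "h \<in> borel_measurable (gen_filt M e m k)"
    unfolding h_def[abs_def] by (rule measurable_If[OF Yk _ S]) simp
  have gP: "g \<in> borel_measurable P" by (rule meas_P[where e=e, OF P(2) em gF])
  have hP: "h \<in> borel_measurable P" by (rule meas_P[where e=e, OF P(2) em hF])
  have eP: "e m (Suc k) \<in> borel_measurable P"
    by (subst measurable_cong_sets[OF P(2) refl]) (rule em)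
  have eq: "Yst e m \<tau> (Suc k) x = h x + g x * e m (Suc k) x" for x
    by (simp add: h_def g_def)
  have eq2: "Yst e m \<tau> k x = h x + g x" for x
    by (simp add: h_def g_def)
  have "(\<integral>\<^sup>+x. Yst e m \<tau> (Suc k) x \<partial>P) = (\<integral>\<^sup>+x. h x + g x * e m (Suc k) x \<partial>P)"
    by (rule nn_integral_cong) (rule eq)
  also have "\<dots> = (\<integral>\<^sup>+x. h x \<partial>P) + (\<integral>\<^sup>+x. g x * e m (Suc k) x \<partial>P)"
    by (rule nn_integral_add) (use hP gP eP in auto)
  also have "\<dots> \<le> (\<integral>\<^sup>+x. h x \<partial>P) + (1 + ennreal c) * (\<integral>\<^sup>+x. g x \<partial>P)"
    by (rule add_left_mono, rule key_ineq[where e=e, OF P em c gF])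
  also have "\<dots> \<le> (1 + ennreal c) * (\<integral>\<^sup>+x. h x \<partial>P) + (1 + ennreal c) * (\<integral>\<^sup>+x. g x \<partial>P)"
  proof -
    have "(\<integral>\<^sup>+x. h x \<partial>P) = 1 * (\<integral>\<^sup>+x. h x \<partial>P)" by simp
    also have "\<dots> \<le> (1 + ennreal c) * (\<integral>\<^sup>+x. h x \<partial>P)"
      by (rule mult_right_mono) auto
    finally show ?thesis by (rule add_right_mono)
  qed
  also have "\<dots> = (1 + ennreal c) * ((\<integral>\<^sup>+x. h x \<partial>P) + (\<integral>\<^sup>+x. g x \<partial>P))"
    by (simp add: distrib_left)
  also have "(\<integral>\<^sup>+x. h x \<partial>P) + (\<integral>\<^sup>+x. g x \<partial>P) = (\<integral>\<^sup>+x. Yst e m \<tau> k x \<partial>P)"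
    unfolding eq2 by (rule nn_integral_add[symmetric]) (use hP gP in auto)
  finally show ?thesis .
qed

lemma Yst_bound:
  assumes P: "prob_space P" "sets P = sets M" and em: "\<And>i. e m i \<in> borel_measurable M"
    and st: "enat_stopping_time (gen_filt M e m) \<tau>"
    and c: "\<And>k. AE x in P. nn_cond_exp P (gen_filt M e m k) (e m (Suc k)) x \<le> 1 + ennreal c"
  shows "(\<integral>\<^sup>+x. Yst e m \<tau> k x \<partial>P) \<le> (1 + ennreal c) ^ k * (\<integral>\<^sup>+x. e m 0 x \<partial>P)"
proof (induction k)
  case 0
  then show ?case by simp
next
  case (Suc k)
  have "(\<integral>\<^sup>+x. Yst e m \<tau> (Suc k) x \<partial>P) \<le> (1 + ennreal c) * (\<integral>\<^sup>+x. Yst e m \<tau> k x \<partial>P)"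
    by (rule Yst_step[where e=e, OF P em st c])
  also have "\<dots> \<le> (1 + ennreal c) * ((1 + ennreal c) ^ k * (\<integral>\<^sup>+x. e m 0 x \<partial>P))"
    by (rule mult_left_mono[OF Suc]) simp
  finally show ?case by (simp add: mult.assoc)
qed

lemma stop_inf: "enat_stopping_time G (\<lambda>_. \<infinity>)"
  unfolding enat_stopping_time_def by simp

lemma Yst_inf: "Yst e m (\<lambda>_. \<infinity>) k = prod_proc e m k"
  using Yst_val[of "\<lambda>_. \<infinity>"] by (auto simp: fun_eq_iff)


lemma pS_fun: "prod_proc e m (Suc k) = (\<lambda>x. prod_proc e m k x * e m (Suc k) x)"
  by (simp add: prod_proc_def atMost_Suc mult.commute fun_eq_iff)

lemma ennreal_pow_eq: assumes c: "0 \<le> c" shows "(1 + ennreal c) ^ k = ennreal ((1 + c) ^ k)"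
proof -
  have "ennreal (1 + c) = 1 + ennreal c" using c by (simp add: ennreal_plus)
  moreover have "ennreal (1 + c) ^ k = ennreal ((1 + c) ^ k)" by (rule ennreal_power) (use c in simp)
  ultimately show ?thesis by metis
qed

lemma prod_bound:
  assumes P: "prob_space P" "sets P = sets M" and em: "\<And>i. e m i \<in> borel_measurable M"
    and c0: "0 \<le> c"
    and c: "\<And>k. AE x in P. nn_cond_exp P (gen_filt M e m k) (e m (Suc k)) x \<le> 1 + ennreal c"
  shows "(\<integral>\<^sup>+x. prod_proc e m k x \<partial>P) \<le> ennreal ((1 + c) ^ k) * (\<integral>\<^sup>+x. e m 0 x \<partial>P)"
  using Yst_bound[where e=e, OF P em stop_inf c, of k] by (simp add: Yst_inf ennreal_pow_eq[OF c0])

lemma minus_bound: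
  fixes a c :: ennreal
  assumes "a \<noteq> \<infinity>" "c \<le> 1 + ennreal d"
  shows "a * c - a \<le> a * ennreal d"
proof -
  have "a * c \<le> a * (1 + ennreal d)" by (rule mult_left_mono) (use assms in auto)
  also have "\<dots> = a + a * ennreal d" by (simp add: distrib_left)
  finally show ?thesis using assms(1) by (simp add: ennreal_minus_le_iff)
qed

lemma one_less_two_ennreal: "(1::ennreal) < 2" by simp


theorem mainTheorem10:
  fixes M :: "'a measure" and Ps :: "'a measure set"
    and e :: "nat \<Rightarrow> nat \<Rightarrow> 'a \<Rightarrow> ennreal" and d :: "nat \<Rightarrow> real"
  assumes Ps: "prob_family M Ps"
    and meas: "\<And>m n. e m n \<in> borel_measurable M"
    and evar: "\<And>n. asymp_evar Ps (\<lambda>m. e m n)"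
    and d_nonneg: "\<And>m. d m \<ge> 0"
    and cond: "\<And>m n P. P \<in> Ps \<Longrightarrow>
       AE x in P. nn_cond_exp P (gen_filt M e m n) (e m (Suc n)) x \<le> 1 + ennreal (d m)"
    and d_lim: "d \<longlonglongrightarrow> 0"
  shows "asymp_supermart Ps (gen_filt M e) (prod_proc e)
       \<and> (\<forall>r :: nat \<Rightarrow> nat. (\<lambda>m. real (r m) * d m) \<longlonglongrightarrow> 0 \<longrightarrow>
            r_asymp_eproc r Ps (gen_filt M e) (prod_proc e))"
proof -
  have PsD: "prob_space P" "sets P = sets M" if "P \<in> Ps" for P
    using Ps that unfolding prob_family_def by auto
  define S where "S m = (SUP P\<in>Ps. \<integral>\<^sup>+x. e m 0 x \<partial>P)" for m
  have "limsup S \<le> 1" using evar[of 0] unfolding asymp_evar_def S_def by simp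
  then have limS: "limsup S < ennreal t" if "1 < t" for t
    using that by (simp add: order.strict_trans1)
  have evS: "eventually (\<lambda>m. S m < 2) sequentially"
    using Limsup_lessD[OF limS[of 2]] by simp
  have Sle: "(\<integral>\<^sup>+x. e m 0 x \<partial>P) \<le> S m" if "P \<in> Ps" for m P
    unfolding S_def using that by (rule SUP_upper)
  have pb: "(\<integral>\<^sup>+x. prod_proc e m k x \<partial>P) \<le> ennreal ((1 + d m) ^ k) * S m" if P: "P \<in> Ps" for m k P
  proof -
    have "(\<integral>\<^sup>+x. prod_proc e m k x \<partial>P) \<le> ennreal ((1 + d m) ^ k) * (\<integral>\<^sup>+x. e m 0 x \<partial>P)"
      by (rule prod_bound[where e=e, OF PsD[OF P] meas d_nonneg cond[OF P]])
    also have "\<dots> \<le> ennreal ((1 + d m) ^ k) * S m"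
      by (rule mult_left_mono[OF Sle[OF P]]) simp
    finally show ?thesis .
  qed
  have part1: "asymp_supermart Ps (gen_filt M e) (prod_proc e)"
    unfolding asymp_supermart_def
  proof
    fix n
    let ?D = "\<lambda>m. SUP P\<in>Ps. \<integral>\<^sup>+ x. delta_pos P (gen_filt M e m) (prod_proc e m) n x \<partial>P"
    have bnd: "eventually (\<lambda>m. ?D m \<le> ennreal (d m * (1 + d m) ^ n * 2)) sequentially"
      using evS
    proof (rule eventually_mono)
      fix m assume Sm: "S m < 2"
      show "?D m \<le> ennreal (d m * (1 + d m) ^ n * 2)"
      proof (rule SUP_least)
        fix P assume P: "P \<in> Ps"
        note PP = PsD[OF P]
        interpret sigma_finite_subalgebra P "gen_filt M e m n"
          by (rule sfs_P[where e=e, OF PP meas])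
        have fin: "(\<integral>\<^sup>+x. prod_proc e m k x \<partial>P) < \<infinity>" for k
        proof -
          have "S m < \<infinity>" using Sm by (simp add: order.strict_trans)
          then have "ennreal ((1 + d m) ^ k) * S m < \<infinity>"
            by (simp add: ennreal_mult_less_top)
          then show ?thesis using pb[OF P, of m k] by (simp add: order.strict_trans1)
        qed
        have EnF: "prod_proc e m n \<in> borel_measurable (gen_filt M e m n)" by (rule prod_meas_filt)
        have EnP: "prod_proc e m n \<in> borel_measurable P" by (rule meas_P[where e=e, OF PP(2) meas EnF])
        have eP: "e m (Suc n) \<in> borel_measurable P"
          by (subst measurable_cong_sets[OF PP(2) refl]) (rule meas)
        have AE1: "AE x in P. prod_proc e m n x * nn_cond_exp P (gen_filt M e m n) (e m (Suc n)) x
            = nn_cond_exp P (gen_filt M e m n) (prod_proc e m (Suc n)) x"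
          unfolding pS_fun[of e m n] by (rule nn_cond_exp_prod[OF EnF eP])
        have AE2: "AE x in P. prod_proc e m n x \<noteq> \<infinity>"
          by (rule nn_integral_noteq_infinite[OF EnP]) (use fin[of n] in simp)
        have "(\<integral>\<^sup>+ x. delta_pos P (gen_filt M e m) (prod_proc e m) n x \<partial>P)
            \<le> (\<integral>\<^sup>+ x. prod_proc e m n x * ennreal (d m) \<partial>P)"
        proof (rule nn_integral_mono_AE)
          show "AE x in P. delta_pos P (gen_filt M e m) (prod_proc e m) n x \<le> prod_proc e m n x * ennreal (d m)"
            using AE1 AE2 cond[OF P, of m n]
          proof eventually_elim
            case (elim x)
            have "delta_pos P (gen_filt M e m) (prod_proc e m) n x
                = nn_cond_exp P (gen_filt M e m n) (prod_proc e m (Suc n)) x - prod_proc e m n x"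
              unfolding delta_pos_def using fin[of "Suc n"] by simp
            also have "\<dots> = prod_proc e m n x * nn_cond_exp P (gen_filt M e m n) (e m (Suc n)) x - prod_proc e m n x"
              using elim(1) by simp
            also have "\<dots> \<le> prod_proc e m n x * ennreal (d m)"
              by (rule minus_bound) (use elim in auto)
            finally show ?case .
          qed
        qed
        also have "\<dots> = (\<integral>\<^sup>+ x. prod_proc e m n x \<partial>P) * ennreal (d m)"
          by (rule nn_integral_multc[OF EnP])
        also have "\<dots> \<le> (ennreal ((1 + d m) ^ n) * 2) * ennreal (d m)"
        proof (rule mult_right_mono)
          show "(\<integral>\<^sup>+ x. prod_proc e m n x \<partial>P) \<le> ennreal ((1 + d m) ^ n) * 2"
          proof -
            have "(\<integral>\<^sup>+ x. prod_proc e m n x \<partial>P) \<le> ennreal ((1 + d m) ^ n) * S m" by (rule pb[OF P])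
            also have "\<dots> \<le> ennreal ((1 + d m) ^ n) * 2"
              by (rule mult_left_mono) (use Sm in auto)
            finally show ?thesis .
          qed
        qed simp
        also have "\<dots> = ennreal (d m * (1 + d m) ^ n * 2)"
          using d_nonneg[of m] by (simp add: ennreal_mult ennreal_mult' ennreal_mult'' mult_ac)
        finally show "(\<integral>\<^sup>+ x. delta_pos P (gen_filt M e m) (prod_proc e m) n x \<partial>P) \<le> ennreal (d m * (1 + d m) ^ n * 2)" .
      qed
    qed
    have lim: "(\<lambda>m. ennreal (d m * (1 + d m) ^ n * 2)) \<longlonglongrightarrow> 0"
    proof -
      have "(\<lambda>m. d m * (1 + d m) ^ n * 2) \<longlonglongrightarrow> 0 * (1 + 0) ^ n * 2"
        by (intro tendsto_intros d_lim)
      then have "(\<lambda>m. ennreal (d m * (1 + d m) ^ n * 2)) \<longlonglongrightarrow> ennreal 0"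
        by (intro tendsto_ennrealI) simp
      then show ?thesis by simp
    qed
    show "?D \<longlonglongrightarrow> 0"
      by (rule tendsto_sandwich[OF _ bnd tendsto_const lim]) simp
  qed
  have part2: "r_asymp_eproc r Ps (gen_filt M e) (prod_proc e)"
    if rd: "(\<lambda>m. real (r m) * d m) \<longlonglongrightarrow> 0" for r
    unfolding r_asymp_eproc_def
  proof (intro allI impI)
    fix \<tau> :: "nat \<Rightarrow> 'a \<Rightarrow> enat"
    assume \<tau>: "\<forall>m. \<tau> m \<in> bounded_stopping_times (enat (r m)) (gen_filt M e m) Ps"
    let ?X = "\<lambda>m. SUP P\<in>Ps. \<integral>\<^sup>+ x. stopped (prod_proc e m) (\<tau> m) x \<partial>P"
    have Xb: "?X m \<le> ennreal ((1 + d m) ^ r m) * S m" for m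
    proof (rule SUP_least)
      fix P assume P: "P \<in> Ps"
      note PP = PsD[OF P]
      have st: "enat_stopping_time (gen_filt M e m) (\<tau> m)"
        and ae: "AE x in P. \<tau> m x \<le> enat (r m)"
        using \<tau> P unfolding bounded_stopping_times_def by auto
      have "(\<integral>\<^sup>+ x. stopped (prod_proc e m) (\<tau> m) x \<partial>P) = (\<integral>\<^sup>+ x. Yst e m (\<tau> m) (r m) x \<partial>P)"
      proof (rule nn_integral_cong_AE)
        show "AE x in P. stopped (prod_proc e m) (\<tau> m) x = Yst e m (\<tau> m) (r m) x"
          using ae
        proof eventually_elim
          case (elim x)
          then obtain j where j: "\<tau> m x = enat j" "j \<le> r m" by (cases "\<tau> m x") auto
          then show ?case using Yst_val[of "\<tau> m" x j "r m" e m] by (simp add: stopped_def)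
        qed
      qed
      also have "\<dots> \<le> (1 + ennreal (d m)) ^ r m * (\<integral>\<^sup>+x. e m 0 x \<partial>P)"
        by (rule Yst_bound[where e=e, OF PP meas st cond[OF P]])
      also have "\<dots> \<le> ennreal ((1 + d m) ^ r m) * S m"
        unfolding ennreal_pow_eq[OF d_nonneg] by (rule mult_left_mono[OF Sle[OF P]]) simp
      finally show "(\<integral>\<^sup>+ x. stopped (prod_proc e m) (\<tau> m) x \<partial>P) \<le> ennreal ((1 + d m) ^ r m) * S m" .
    qed
    have aexp: "(1 + d m) ^ r m \<le> exp (real (r m) * d m)" for m
    proof -
      have "(1 + d m) ^ r m \<le> exp (d m) ^ r m"
        by (rule power_mono) (use d_nonneg[of m] in auto)
      then show ?thesis by (simp add: exp_of_nat_mult)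
    qed
    have explim: "(\<lambda>m. exp (real (r m) * d m)) \<longlonglongrightarrow> 1"
      using tendsto_exp[OF rd] by simp
    show "limsup ?X \<le> 1"
      unfolding Limsup_le_iff
    proof (intro allI impI)
      fix y :: ennreal assume y: "1 < y"
      obtain t :: real where t: "1 < t" "ennreal (t * t) \<le> y"
      proof (cases "y = \<top>")
        case True
        then show ?thesis using that[of 2] by simp
      next
        case False
        then obtain q where q: "y = ennreal q" "0 \<le> q" by (cases y) auto
        then have q1: "1 < q" using y by simp
        show ?thesis
        proof (rule that[of "sqrt q"])
          show "1 < sqrt q" using q1 by simp
          show "ennreal (sqrt q * sqrt q) \<le> y" using q by simp
        qed
      qed
      have ev1: "eventually (\<lambda>m. S m < ennreal t) sequentially"
        by (rule Limsup_lessD[OF limS]) (use t in simp)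
      have ev2: "eventually (\<lambda>m. exp (real (r m) * d m) < t) sequentially"
        by (rule order_tendstoD(2)[OF explim t(1)])
      show "eventually (\<lambda>m. ?X m < y) sequentially"
        using ev1 ev2
      proof eventually_elim
        case (elim m)
        have a: "(1 + d m) ^ r m < t" using aexp[of m] elim(2) by linarith
        have a0: "0 \<le> (1 + d m) ^ r m" using d_nonneg[of m] by simp
        have "?X m \<le> ennreal ((1 + d m) ^ r m) * S m" by (rule Xb)
        also have "\<dots> \<le> ennreal ((1 + d m) ^ r m) * ennreal t"
          by (rule mult_left_mono) (use elim(1) in auto)
        also have "\<dots> = ennreal ((1 + d m) ^ r m * t)" by (rule ennreal_mult'[symmetric, OF a0])
        also have "\<dots> < ennreal (t * t)"
          using a t(1) a0 by (subst ennreal_less_iff) (auto intro: mult_strict_right_mono)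
        also have "\<dots> \<le> y" by (rule t(2))
        finally show ?case .
      qed
    qed
  qed
  show ?thesis using part1 part2 by blast
qed

end
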